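(* Let $\hat q$ be an $m\times m$ and $\hat p$ an $s\times s$ parametric matrix, let $M$ be an $n\times m$ matrix over $\mathfrak R$ and $N$ an $m\times s$ $(\hat q,\hat p)$-Manin matrix over $\mathfrak R$ such that every $N_{ij}$ commutes with every $M_{kl}$. Let $I=(i_1,\dots,i_r)$ be a multi-index with entries in $\{1,\dots,n\}$ and $K=(k_1\le\dots\le k_r)$ a nondecreasing multi-index with entries in $\{1,\dots,s\}$. Then $$\widehat{\mathrm{rper}}_{\hat p}((MN)_{IK})=\sum_J\widehat{\mathrm{rper}}_{\hat q}(M_{IJ})\,\widehat{\mathrm{rper}}_{\hat p}(N_{JK}),$$ the sum over all nondecreasing multi-indices $J=(j_1\le\dots\le j_r)$ with entries in $\{1,\dots,m\}$. In particular, if $m=n=s$, then $\widehat{\mathrm{rper}}_{\hat p}(MN)=\sum_J\widehat{\mathrm{rper}}_{\hat q}(M_{[n]J})\,\widehat{\mathrm{rper}}_{\hat p}(N_{J[n]})$, where $[n]=(1,2,\dots,n)$.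
   Context: $\mathfrak R$ is an associative unital algebra over $\mathbb C$. A parametric $n\times n$ matrix is a matrix $\hat q=(q_{ij})$ of nonzero complex numbers with $q_{ij}q_{ji}=1$, $q_{ii}=1$. For parametric $\hat q$ ($m\times m$) and $\hat p$ ($s\times s$), an $m\times s$ matrix $N$ over $\mathfrak R$ is a $(\hat q,\hat p)$-Manin matrix if $N_{ik}N_{jk}=q_{ji}N_{jk}N_{ik}$ for $i<j$ and all $k$, and $N_{ik}N_{jl}-q_{ji}p_{kl}N_{jl}N_{ik}+p_{kl}N_{il}N_{jk}-q_{ji}N_{jk}N_{il}=0$ for $i<j$, $k<l$. For a nondecreasing multi-index $J=(j_1\le\dots\le j_r)$ and $\sigma\in S_r$, $\mu(\hat p,J,\sigma)=\prod_{s<t,\ \sigma(s)>\sigma(t)}p_{j_{\sigma(t)}j_{\sigma(s)}}$. For a matrix $X$, any multi-index $I=(i_1,\dots,i_r)$ and nondecreasing $J$, $\mathrm{rper}_{\hat p}(X_{IJ})=\sum_{\sigma\in S_r}\mu(\hat p,J,\sigma)X_{i_1,j_{\sigma(1)}}\cdots X_{i_r,j_{\sigma(r)}}$, and $\widehat{\mathrm{rper}}_{\hat p}(X_{IJ})=\frac1{v(J)}\mathrm{rper}_{\hat p}(X_{IJ})$ where $v(J)=\prod_{a}|\{t:j_t=a\}|!$. $\widehat{\mathrm{rper}}_{\hat p}(X)$ for square $X$ is the case $I=J=(1,\dots,n)$. *)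

theory Defs
  imports Complex_Main "HOL-Library.FuncSet" "HOL-Combinatorics.Permutations"
begin

class complex_algebra_1 = ring_1 +
  fixes scaleC :: "complex \<Rightarrow> 'a \<Rightarrow> 'a" (infixr "*\<^sub>C" 75)
  assumes scaleC_add_right: "a *\<^sub>C (x + y) = a *\<^sub>C x + a *\<^sub>C y"
    and scaleC_add_left: "(a + b) *\<^sub>C x = a *\<^sub>C x + b *\<^sub>C x"
    and scaleC_scaleC: "a *\<^sub>C (b *\<^sub>C x) = (a * b) *\<^sub>C x"
    and scaleC_one: "1 *\<^sub>C x = x"
    and mult_scaleC_left: "(a *\<^sub>C x) * y = a *\<^sub>C (x * y)"
    and mult_scaleC_right: "x * (a *\<^sub>C y) = a *\<^sub>C (x * y)"

text \<open>Matrices are functions of 1-based indices; multi-indices of length r are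
  functions on {1..r}.\<close>

definition parametric_mat :: "nat \<Rightarrow> (nat \<Rightarrow> nat \<Rightarrow> complex) \<Rightarrow> bool" where
  "parametric_mat n q \<longleftrightarrow> (\<forall>i\<in>{1..n}. \<forall>j\<in>{1..n}. q i j \<noteq> 0 \<and> q i j * q j i = 1)
     \<and> (\<forall>i\<in>{1..n}. q i i = 1)"

definition manin :: "nat \<Rightarrow> nat \<Rightarrow> (nat \<Rightarrow> nat \<Rightarrow> complex) \<Rightarrow> (nat \<Rightarrow> nat \<Rightarrow> complex)
    \<Rightarrow> (nat \<Rightarrow> nat \<Rightarrow> 'a::complex_algebra_1) \<Rightarrow> bool" where
  "manin m s q p N \<longleftrightarrow>
     (\<forall>i\<in>{1..m}. \<forall>j\<in>{1..m}. \<forall>k\<in>{1..s}. i < j \<longrightarrow>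
        N i k * N j k = q j i *\<^sub>C (N j k * N i k)) \<and>
     (\<forall>i\<in>{1..m}. \<forall>j\<in>{1..m}. \<forall>k\<in>{1..s}. \<forall>l\<in>{1..s}. i < j \<longrightarrow> k < l \<longrightarrow>
        N i k * N j l - (q j i * p k l) *\<^sub>C (N j l * N i k)
          + p k l *\<^sub>C (N i l * N j k) - q j i *\<^sub>C (N j k * N i l) = 0)"

definition nondecr :: "nat \<Rightarrow> (nat \<Rightarrow> nat) \<Rightarrow> bool" where
  "nondecr r J \<longleftrightarrow> (\<forall>a\<in>{1..r}. \<forall>b\<in>{1..r}. a \<le> b \<longrightarrow> J a \<le> J b)"

definition mu :: "(nat \<Rightarrow> nat \<Rightarrow> complex) \<Rightarrow> nat \<Rightarrow> (nat \<Rightarrow> nat) \<Rightarrow> (nat \<Rightarrow> nat) \<Rightarrow> complex" where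
  "mu p r J \<sigma> = (\<Prod>(a, b)\<in>{(a, b). a \<in> {1..r} \<and> b \<in> {1..r} \<and> a < b \<and> \<sigma> a > \<sigma> b}.
      p (J (\<sigma> b)) (J (\<sigma> a)))"

definition rper :: "(nat \<Rightarrow> nat \<Rightarrow> complex) \<Rightarrow> nat \<Rightarrow> (nat \<Rightarrow> nat \<Rightarrow> 'a::complex_algebra_1)
    \<Rightarrow> (nat \<Rightarrow> nat) \<Rightarrow> (nat \<Rightarrow> nat) \<Rightarrow> 'a" where
  "rper p r X I J = (\<Sum>\<sigma> | \<sigma> permutes {1..r}.
      mu p r J \<sigma> *\<^sub>C prod_list (map (\<lambda>t. X (I t) (J (\<sigma> t))) [1..<r+1]))"

definition vmult :: "nat \<Rightarrow> (nat \<Rightarrow> nat) \<Rightarrow> nat" where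
  "vmult r J = (\<Prod>a\<in>J ` {1..r}. fact (card {t\<in>{1..r}. J t = a}))"

definition rper_hat :: "(nat \<Rightarrow> nat \<Rightarrow> complex) \<Rightarrow> nat \<Rightarrow> (nat \<Rightarrow> nat \<Rightarrow> 'a::complex_algebra_1)
    \<Rightarrow> (nat \<Rightarrow> nat) \<Rightarrow> (nat \<Rightarrow> nat) \<Rightarrow> 'a" where
  "rper_hat p r X I J = (1 / of_nat (vmult r J)) *\<^sub>C rper p r X I J"

definition matmul :: "nat \<Rightarrow> (nat \<Rightarrow> nat \<Rightarrow> 'a::ring_1) \<Rightarrow> (nat \<Rightarrow> nat \<Rightarrow> 'a) \<Rightarrow> nat \<Rightarrow> nat \<Rightarrow> 'a" where
  "matmul m M N i k = (\<Sum>j=1..m. M i j * N j k)"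

definition nondecr_indices :: "nat \<Rightarrow> nat \<Rightarrow> (nat \<Rightarrow> nat) set" where
  "nondecr_indices r m = {J. J \<in> {1..r} \<rightarrow>\<^sub>E {1..m} \<and> nondecr r J}"

end

theory Submission
  imports Defs
begin


lemma scaleC_zero_right [simp]: "(c::complex) *\<^sub>C (0::'a::complex_algebra_1) = 0"
proof -
  have "c *\<^sub>C (0::'a) = c *\<^sub>C 0 + c *\<^sub>C 0" by (metis add_0 scaleC_add_right)
  then show ?thesis by simp
qed

lemma scaleC_zero_left [simp]: "(0::complex) *\<^sub>C (x::'a::complex_algebra_1) = 0"
proof -
  have "(0::complex) *\<^sub>C x = 0 *\<^sub>C x + 0 *\<^sub>C x" by (metis add_0 scaleC_add_left)
  then show ?thesis by simp
qed

lemma scaleC_sum_right: "(c::complex) *\<^sub>C (\<Sum>i\<in>A. f i) = (\<Sum>i\<in>A. c *\<^sub>C (f i::'a::complex_algebra_1))"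
  by (induction A rule: infinite_finite_induct) (auto simp: scaleC_add_right)

lemma scaleC_sum_left: "(\<Sum>i\<in>A. c i) *\<^sub>C (x::'a::complex_algebra_1) = (\<Sum>i\<in>A. c i *\<^sub>C x)"
  by (induction A rule: infinite_finite_induct) (auto simp: scaleC_add_left)

lemma of_nat_scaleC: "(of_nat n :: 'a::complex_algebra_1) * x = (of_nat n :: complex) *\<^sub>C x"
  by (induction n) (auto simp: scaleC_add_left scaleC_one distrib_right)

lemma scaleC_minus_right: "(c::complex) *\<^sub>C (x - y) = c *\<^sub>C x - c *\<^sub>C (y::'a::complex_algebra_1)"
  by (metis add_diff_cancel diff_add_cancel scaleC_add_right)

lemma scaleC_mult_both: "((a::complex) *\<^sub>C x) * (b *\<^sub>C (y::'a::complex_algebra_1)) = (a*b) *\<^sub>C (x*y)"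
  by (simp add: mult_scaleC_left mult_scaleC_right scaleC_scaleC mult.commute)



definition invs :: "nat \<Rightarrow> (nat \<Rightarrow> nat) \<Rightarrow> (nat \<times> nat) set" where
  "invs r w = {(a, b). a \<in> {1..r} \<and> b \<in> {1..r} \<and> a < b \<and> w a > w b}"

lemma finite_invs [simp]: "finite (invs r w)"
  by (rule finite_subset[of _ "{1..r} \<times> {1..r}"]) (auto simp: invs_def)

lemma mu_invs: "mu p r J \<sigma> = (\<Prod>(a, b)\<in>invs r \<sigma>. p (J (\<sigma> b)) (J (\<sigma> a)))"
  unfolding mu_def invs_def by simp

abbreviation sw :: "nat \<Rightarrow> nat \<times> nat \<Rightarrow> nat \<times> nat" where
  "sw t \<equiv> (\<lambda>(a, b). (Transposition.transpose t (Suc t) a, Transposition.transpose t (Suc t) b))"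

lemma sw_invol [simp]: "sw t (sw t x) = x"
  by (cases x) auto

lemma inj_sw: "inj_on (sw t) A"
  by (rule inj_on_inverseI[where g="sw t"]) simp

lemma in_sw_image: "x \<in> sw t ` A \<longleftrightarrow> sw t x \<in> A"
proof
  assume "x \<in> sw t ` A" then show "sw t x \<in> A" by auto
next
  assume "sw t x \<in> A" then show "x \<in> sw t ` A" using image_eqI[of x "sw t" "sw t x" A] by simp
qed

lemma transp_lt:
  assumes "a < b" "(a, b) \<noteq> (t, Suc t)"
  shows "Transposition.transpose t (Suc t) a < Transposition.transpose t (Suc t) b"
  using assms unfolding transpose_def by auto

lemma transp_range: "1 \<le> t \<Longrightarrow> t < r \<Longrightarrow> a \<in> {1..r} \<Longrightarrow> Transposition.transpose t (Suc t) a \<in> {1..r}"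
  unfolding transpose_def by auto

lemma invs_swap_core:
  assumes "1 \<le> t" "t < r"
  shows "invs r (w \<circ> Transposition.transpose t (Suc t)) - {(t, Suc t)} =
         sw t ` (invs r w - {(t, Suc t)})"
proof (rule set_eqI)
  fix x :: "nat \<times> nat"
  let ?s = "Transposition.transpose t (Suc t)"
  obtain a b where x: "x = (a, b)" by (cases x)
  have 1: "(?s a, ?s b) \<noteq> (t, Suc t) \<longleftrightarrow> (a, b) \<noteq> (Suc t, t)"
    unfolding transpose_def by auto
  have 2: "(?s a, ?s b) = (t, Suc t) \<longleftrightarrow> (a, b) = (Suc t, t)"
    unfolding transpose_def by auto
  show "x \<in> invs r (w \<circ> ?s) - {(t, Suc t)} \<longleftrightarrow>
        x \<in> sw t ` (invs r w - {(t, Suc t)})"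
  proof
    assume "x \<in> invs r (w \<circ> ?s) - {(t, Suc t)}"
    then have h: "a \<in> {1..r}" "b \<in> {1..r}" "a < b" "w (?s a) > w (?s b)" "(a,b) \<noteq> (t, Suc t)"
      by (auto simp: invs_def x)
    have "?s a < ?s b" by (rule transp_lt) (use h in auto)
    moreover have "?s a \<in> {1..r}" "?s b \<in> {1..r}" using transp_range assms h by auto
    moreover have "(?s a, ?s b) \<noteq> (t, Suc t)" using 2 h by auto
    ultimately show "x \<in> sw t ` (invs r w - {(t, Suc t)})"
      unfolding in_sw_image x using h by (auto simp: invs_def)
  next
    assume "x \<in> sw t ` (invs r w - {(t, Suc t)})"
    then have h: "?s a \<in> {1..r}" "?s b \<in> {1..r}" "?s a < ?s b" "w (?s a) > w (?s b)" "(?s a, ?s b) \<noteq> (t, Suc t)"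
      unfolding in_sw_image x by (auto simp: invs_def)
    have "?s (?s a) < ?s (?s b)" by (rule transp_lt) (use h in auto)
    then have "a < b" by simp
    moreover have "a \<in> {1..r}" "b \<in> {1..r}" using transp_range[OF assms, of "?s a"] transp_range[OF assms, of "?s b"] h by auto
    moreover have "(a, b) \<noteq> (t, Suc t)" using h(3) unfolding transpose_def by auto
    ultimately show "x \<in> invs r (w \<circ> ?s) - {(t, Suc t)}" using h by (auto simp: invs_def x)
  qed
qed

lemma invs_swap_mem: "(t, Suc t) \<in> invs r w \<longleftrightarrow> 1 \<le> t \<and> Suc t \<le> r \<and> w t > w (Suc t)"
  by (auto simp: invs_def)

lemma invs_swap:
  assumes "1 \<le> t" "t < r"
  shows "invs r (w \<circ> Transposition.transpose t (Suc t)) =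
        (if w t < w (Suc t) then insert (t, Suc t) else id) (sw t ` (invs r w - {(t, Suc t)}))"
  using invs_swap_core[OF assms, of w] invs_swap_mem[of t r "w \<circ> Transposition.transpose t (Suc t)"] assms
  by (auto split: if_splits)

lemma prod_invs_swap:
  assumes "1 \<le> t" "t < r" "w t \<le> w (Suc t)"
  shows "(\<Prod>(a, b)\<in>invs r (w \<circ> Transposition.transpose t (Suc t)).
            h (w (Transposition.transpose t (Suc t) a)) (w (Transposition.transpose t (Suc t) b)))
       = (if w t < w (Suc t) then h (w (Suc t)) (w t) else 1) * (\<Prod>(a, b)\<in>invs r w. h (w a) (w b))"
proof -
  let ?s = "Transposition.transpose t (Suc t)"
  have nt: "(t, Suc t) \<notin> invs r w" using assms by (auto simp: invs_def)
  then have e: "invs r w - {(t, Suc t)} = invs r w" by auto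
  have nt2: "(t, Suc t) \<notin> sw t ` invs r w" unfolding in_sw_image by (simp add: invs_def)
  have r: "(\<Prod>x\<in>sw t ` invs r w. (\<lambda>(a, b). h (w (?s a)) (w (?s b))) x) = (\<Prod>(a, b)\<in>invs r w. h (w a) (w b))"
    by (subst prod.reindex[OF inj_sw]) (auto intro!: prod.cong)
  show ?thesis
    unfolding invs_swap[OF assms(1,2)] e using nt2 r
    by (auto simp: prod.insert)
qed

lemma card_invs_swap:
  assumes "1 \<le> t" "t < r" "w t < w (Suc t)"
  shows "card (invs r (w \<circ> Transposition.transpose t (Suc t))) = Suc (card (invs r w))"
proof -
  have nt: "(t, Suc t) \<notin> invs r w" using assms by (auto simp: invs_def)
  then have e: "invs r w - {(t, Suc t)} = invs r w" by auto
  have nt2: "(t, Suc t) \<notin> sw t ` invs r w" unfolding in_sw_image by (simp add: invs_def)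
  show ?thesis
    unfolding invs_swap[OF assms(1,2)] e using nt2 assms(3)
    by (simp add: card_image[OF inj_sw])
qed

lemma mu_swap:
  assumes "1 \<le> t" "t < r" "\<sigma> t \<le> \<sigma> (Suc t)"
  shows "mu p r K (\<sigma> \<circ> Transposition.transpose t (Suc t)) =
     (if \<sigma> t < \<sigma> (Suc t) then p (K (\<sigma> t)) (K (\<sigma> (Suc t))) else 1) * mu p r K \<sigma>"
  using prod_invs_swap[OF assms, of "\<lambda>x y. p (K y) (K x)"]
  by (simp add: mu_invs)



lemma adj_nondecr:
  assumes "\<And>t. 1 \<le> t \<Longrightarrow> t < r \<Longrightarrow> w t \<le> w (Suc t)"
  shows "nondecr r w"
proof -
  have *: "\<forall>a. 1 \<le> a \<longrightarrow> a + d \<le> r \<longrightarrow> w a \<le> w (a + d)" for d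
  proof (induction d)
    case (Suc d)
    show ?case
    proof (intro allI impI)
      fix a assume a: "1 \<le> a" "a + Suc d \<le> r"
      have "w a \<le> w (a + d)" using Suc a by auto
      also have "\<dots> \<le> w (Suc (a + d))" using assms[of "a + d"] a by auto
      finally show "w a \<le> w (a + Suc d)" by simp
    qed
  qed simp
  show ?thesis unfolding nondecr_def
  proof (intro ballI impI)
    fix a b assume "a \<in> {1..r}" "b \<in> {1..r}" "a \<le> b"
    then show "w a \<le> w b" using *[of "b - a"] by auto
  qed
qed

lemma nondecr_invs_empty: "nondecr r w \<Longrightarrow> invs r w = {}"
proof -
  assume nd: "nondecr r w"
  { fix a b assume "(a, b) \<in> invs r w"
    then have "a \<in> {1..r}" "b \<in> {1..r}" "a \<le> b" "w a > w b" by (auto simp: invs_def)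
    then have False using nd unfolding nondecr_def by (meson leD) }
  then show ?thesis by auto
qed

lemma invs_empty_nondecr: "invs r w = {} \<Longrightarrow> nondecr r w"
  unfolding nondecr_def
proof (intro ballI impI)
  fix a b assume e: "invs r w = {}" and ab: "a \<in> {1..r}" "b \<in> {1..r}" "a \<le> b"
  show "w a \<le> w b"
  proof (rule ccontr)
    assume "\<not> w a \<le> w b"
    then have "(a, b) \<in> invs r w" using ab by (cases "a = b") (auto simp: invs_def)
    then show False using e by simp
  qed
qed

lemma descent_exists:
  assumes "invs r w \<noteq> {}"
  shows "\<exists>t. 1 \<le> t \<and> t < r \<and> w (Suc t) < w t"
  using adj_nondecr[of r w] nondecr_invs_empty[of r w] assms by force

lemma nondecr_count:
  assumes "nondecr r F" "x \<in> {1..r}"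
  shows "F x \<le> c \<longleftrightarrow> x \<le> card {y\<in>{1..r}. F y \<le> c}"
proof
  assume "F x \<le> c"
  then have "{1..x} \<subseteq> {y\<in>{1..r}. F y \<le> c}"
  proof (intro subsetI)
    fix y assume y: "y \<in> {1..x}"
    then have "F y \<le> F x" using assms unfolding nondecr_def by auto
    then show "y \<in> {y\<in>{1..r}. F y \<le> c}" using y assms \<open>F x \<le> c\<close> by auto
  qed
  from card_mono[OF _ this] show "x \<le> card {y\<in>{1..r}. F y \<le> c}" by simp
next
  assume h: "x \<le> card {y\<in>{1..r}. F y \<le> c}"
  show "F x \<le> c"
  proof (rule ccontr)
    assume "\<not> F x \<le> c"
    then have "{y\<in>{1..r}. F y \<le> c} \<subseteq> {1..<x}"
    proof (intro subsetI)
      fix y assume y: "y \<in> {y\<in>{1..r}. F y \<le> c}" and nc: "\<not> F x \<le> c"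
      show "y \<in> {1..<x}"
      proof (rule ccontr)
        assume "y \<notin> {1..<x}"
        then have "x \<le> y" using y by auto
        then have "F x \<le> F y" using assms y unfolding nondecr_def by auto
        then show False using y nc by auto
      qed
    qed
    from card_mono[OF _ this] have "card {y\<in>{1..r}. F y \<le> c} \<le> x - 1" by simp
    moreover have "1 \<le> x" using assms by simp
    ultimately show False using h by linarith
  qed
qed

lemma nondecr_perm_eq:
  assumes "nondecr r J" "nondecr r (J \<circ> \<rho>)" "\<rho> permutes {1..r}" "x \<in> {1..r}"
  shows "J (\<rho> x) = J x"
proof -
  have img: "\<rho> ` {y\<in>{1..r}. J (\<rho> y) \<le> c} = {y\<in>{1..r}. J y \<le> c}" for c
  proof
    show "\<rho> ` {y\<in>{1..r}. J (\<rho> y) \<le> c} \<subseteq> {y\<in>{1..r}. J y \<le> c}"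
      using permutes_in_image[OF assms(3)] by auto
  next
    show "{y\<in>{1..r}. J y \<le> c} \<subseteq> \<rho> ` {y\<in>{1..r}. J (\<rho> y) \<le> c}"
    proof
      fix z assume z: "z \<in> {y\<in>{1..r}. J y \<le> c}"
      have "inv \<rho> z \<in> {1..r}" using z permutes_in_image[OF permutes_inv[OF assms(3)]] by auto
      moreover have "\<rho> (inv \<rho> z) = z" using permutes_inverses(1)[OF assms(3)] by simp
      ultimately show "z \<in> \<rho> ` {y\<in>{1..r}. J (\<rho> y) \<le> c}" using z by (auto intro!: image_eqI[of z \<rho> "inv \<rho> z"])
    qed
  qed
  have cd: "card {y\<in>{1..r}. J (\<rho> y) \<le> c} = card {y\<in>{1..r}. J y \<le> c}" for c
    using card_image[OF permutes_inj_on[OF assms(3)], of "{y\<in>{1..r}. J (\<rho> y) \<le> c}"] img[of c] by simp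
  have "J (\<rho> x) \<le> c \<longleftrightarrow> J x \<le> c" for c
    using nondecr_count[OF assms(2,4), of c] nondecr_count[OF assms(1,4), of c] cd[of c] by simp
  then show ?thesis by (meson antisym order_refl)
qed

lemma transp_permutes: "1 \<le> t \<Longrightarrow> t < r \<Longrightarrow> Transposition.transpose t (Suc t) permutes {1..r}"
  by (rule permutes_swap_id) auto

lemma comp_transp_invol: "w \<circ> Transposition.transpose t (Suc t) \<circ> Transposition.transpose t (Suc t) = w"
  by (simp add: comp_assoc)

lemma sort_exists:
  assumes "g \<in> {1..r} \<rightarrow>\<^sub>E {1..m}"
  shows "\<exists>J\<in>nondecr_indices r m. \<exists>\<tau>. \<tau> permutes {1..r} \<and> g = J \<circ> \<tau>"
  using assms
proof (induction "card (invs r g)" arbitrary: g rule: less_induct)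
  case less
  show ?case
  proof (cases "invs r g = {}")
    case True
    have "nondecr r g" using True by (rule invs_empty_nondecr)
    then have "g \<in> nondecr_indices r m" using less.prems by (simp add: nondecr_indices_def)
    then show ?thesis by (intro bexI[of _ g] exI[of _ id]) (auto simp: permutes_id)
  next
    case False
    obtain t where t: "1 \<le> t" "t < r" "g (Suc t) < g t" using descent_exists[OF False] by blast
    let ?s = "Transposition.transpose t (Suc t)"
    define g' where "g' = g \<circ> ?s"
    have g'g: "g' \<circ> ?s = g" unfolding g'_def by (rule comp_transp_invol)
    have lt: "g' t < g' (Suc t)" using t by (simp add: g'_def)
    have "card (invs r g) = Suc (card (invs r g'))"
      using card_invs_swap[OF t(1,2) lt] g'g by simp
    then have lt2: "card (invs r g') < card (invs r g)" by simp
    have sp: "?s permutes {1..r}" by (rule transp_permutes[OF t(1,2)])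
    have "g' \<in> {1..r} \<rightarrow>\<^sub>E {1..m}"
      using less.prems permutes_in_image[OF sp] permutes_not_in[OF sp] unfolding g'_def
      by (auto simp: PiE_def Pi_def extensional_def)
    from less.hyps[OF lt2 this] obtain J \<tau> where J: "J \<in> nondecr_indices r m" "\<tau> permutes {1..r}" "g' = J \<circ> \<tau>"
      by blast
    have "g = J \<circ> (\<tau> \<circ> ?s)" using g'g J(3) by (simp add: comp_assoc)
    moreover have "\<tau> \<circ> ?s permutes {1..r}" by (rule permutes_compose[OF sp J(2)])
    ultimately show ?thesis using J(1) by blast
  qed
qed

lemma sort_unique:
  assumes "J \<in> nondecr_indices r m" "J' \<in> nondecr_indices r m"
    "\<tau> permutes {1..r}" "\<tau>' permutes {1..r}" "J \<circ> \<tau> = J' \<circ> \<tau>'"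
  shows "J = J'"
proof -
  let ?\<rho> = "\<tau> \<circ> inv \<tau>'"
  have rp: "?\<rho> permutes {1..r}" by (rule permutes_compose[OF permutes_inv[OF assms(4)] assms(3)])
  have "J' = J' \<circ> \<tau>' \<circ> inv \<tau>'" by (simp add: fun_eq_iff permutes_inverses(1)[OF assms(4)])
  also have "\<dots> = J \<circ> ?\<rho>" by (metis assms(5) comp_assoc)
  finally have J': "J' = J \<circ> ?\<rho>" .
  have nd: "nondecr r J" "nondecr r (J \<circ> ?\<rho>)" using assms(1,2) J' by (auto simp: nondecr_indices_def)
  show ?thesis
  proof
    fix x show "J x = J' x"
    proof (cases "x \<in> {1..r}")
      case True
      then show ?thesis using nondecr_perm_eq[OF nd rp True] J' by simp
    next
      case False
      then show ?thesis using assms(1,2) by (auto simp: nondecr_indices_def PiE_def extensional_def)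
    qed
  qed
qed



lemma restr_permutes:
  assumes "\<tau> permutes S" "finite S" "\<forall>x\<in>S. J (\<tau> x) = J x"
  shows "(\<lambda>x. if x \<in> {y\<in>S. J y = a} then \<tau> x else x) permutes {y\<in>S. J y = a}"
proof (rule bij_imp_permutes)
  let ?L = "{y\<in>S. J y = a}"
  let ?f = "\<lambda>x. if x \<in> ?L then \<tau> x else x"
  have sub: "?f ` ?L \<subseteq> ?L" using assms permutes_in_image[OF assms(1)] by auto
  have inj: "inj_on ?f ?L" using permutes_inj_on[OF assms(1)] by (auto simp: inj_on_def)
  have "?f ` ?L = ?L" by (rule endo_inj_surj) (use sub inj assms(2) in auto)
  then show "bij_betw ?f ?L ?L" using inj by (simp add: bij_betw_def)
qed auto

lemma glue_permutes:
  assumes "finite S" "PP \<in> (\<Pi>\<^sub>E a\<in>J ` S. {\<pi>. \<pi> permutes {y\<in>S. J y = a}})"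
  shows "(\<lambda>x. if x \<in> S then PP (J x) x else x) permutes S \<and>
         (\<forall>x\<in>S. J ((\<lambda>x. if x \<in> S then PP (J x) x else x) x) = J x)"
proof -
  let ?f = "\<lambda>x. if x \<in> S then PP (J x) x else x"
  have P: "PP (J x) permutes {y\<in>S. J y = J x}" if "x \<in> S" for x
  proof -
    have "J x \<in> J ` S" using that by (rule imageI)
    then show ?thesis using assms(2) by (simp only: PiE_iff mem_Collect_eq)
  qed
  have inL: "PP (J x) x \<in> {y\<in>S. J y = J x}" if "x \<in> S" for x
    using permutes_in_image[OF P[OF that], of x] that by simp
  have pres: "J (?f x) = J x" if "x \<in> S" for x using inL[OF that] that by simp
  have sub: "?f ` S \<subseteq> S" using inL by auto
  have inj: "inj_on ?f S"
  proof (rule inj_onI)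
    fix x y assume xy: "x \<in> S" "y \<in> S" "?f x = ?f y"
    have "J x = J (?f x)" using pres[OF xy(1)] by simp
    also have "\<dots> = J (?f y)" using xy(3) by simp
    also have "\<dots> = J y" using pres[OF xy(2)] by simp
    finally have Jxy: "J x = J y" .
    then have "PP (J x) x = PP (J x) y" using xy by simp
    then show "x = y" using permutes_inj[OF P[OF xy(1)]] by (simp add: inj_eq)
  qed
  have "?f ` S = S" by (rule endo_inj_surj) (use sub inj assms(1) in auto)
  then have "?f permutes S" using inj by (intro bij_imp_permutes) (auto simp: bij_betw_def)
  then show ?thesis using pres by blast
qed

lemma stab_card:
  assumes "finite S"
  shows "card {\<tau>. \<tau> permutes S \<and> (\<forall>x\<in>S. J (\<tau> x) = J x)} = (\<Prod>a\<in>J ` S. fact (card {x\<in>S. J x = a}))"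
proof -
  let ?A = "J ` S"
  let ?L = "\<lambda>a. {y\<in>S. J y = a}"
  let ?P = "\<Pi>\<^sub>E a\<in>?A. {\<pi>. \<pi> permutes ?L a}"
  let ?St = "{\<tau>. \<tau> permutes S \<and> (\<forall>x\<in>S. J (\<tau> x) = J x)}"
  let ?psi = "\<lambda>PP. (\<lambda>x. if x \<in> S then PP (J x) x else x)"
  have "bij_betw ?psi ?P ?St"
  proof (rule bij_betw_imageI)
    show "inj_on ?psi ?P"
    proof (rule inj_onI)
      fix P1 P2 assume h: "P1 \<in> ?P" "P2 \<in> ?P" "?psi P1 = ?psi P2"
      show "P1 = P2"
      proof
        fix a show "P1 a = P2 a"
        proof (cases "a \<in> ?A")
          case False then show ?thesis using h(1,2) by (auto simp: PiE_def extensional_def)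
        next
          case True
          have p1: "P1 a permutes ?L a" and p2: "P2 a permutes ?L a" using h(1,2) True by (auto simp only: PiE_iff mem_Collect_eq)
          show ?thesis
          proof
            fix x show "P1 a x = P2 a x"
            proof (cases "x \<in> ?L a")
              case True
              then have e: "?psi P1 x = P1 a x" "?psi P2 x = P2 a x" by auto
              have "?psi P1 x = ?psi P2 x" using h(3) by (rule fun_cong)
              then show ?thesis using e by simp
            next
              case False
              then show ?thesis using permutes_not_in[OF p1] permutes_not_in[OF p2] by simp
            qed
          qed
        qed
      qed
    qed
  next
    show "?psi ` ?P = ?St"
    proof
      show "?psi ` ?P \<subseteq> ?St"
      proof
        fix y assume "y \<in> ?psi ` ?P"
        then obtain PP where PP: "PP \<in> ?P" "y = ?psi PP" by blast
        from glue_permutes[OF assms PP(1)] PP(2) show "y \<in> ?St" by simp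
      qed
    next
      show "?St \<subseteq> ?psi ` ?P"
      proof
        fix \<tau> assume t: "\<tau> \<in> ?St"
        let ?PP = "\<lambda>a\<in>?A. (\<lambda>x. if x \<in> ?L a then \<tau> x else x)"
        have m: "?PP \<in> ?P" using restr_permutes[OF _ assms] t by auto
        have e: "?psi ?PP = \<tau>"
        proof
          fix x show "?psi ?PP x = \<tau> x"
          proof (cases "x \<in> S")
            case True
            then show ?thesis by simp
          next
            case False
            then show ?thesis using t permutes_not_in[of \<tau> S x] by simp
          qed
        qed
        show "\<tau> \<in> ?psi ` ?P" by (rule image_eqI[where f="?psi" and x="?PP", OF e[symmetric] m])
      qed
    qed
  qed
  then have "card ?St = card ?P" by (simp add: bij_betw_same_card)
  also have "\<dots> = (\<Prod>a\<in>?A. card {\<pi>. \<pi> permutes ?L a})"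
    by (rule card_PiE) (use assms in simp)
  also have "\<dots> = (\<Prod>a\<in>?A. fact (card (?L a)))"
  proof (rule prod.cong[OF refl])
    fix a show "card {\<pi>. \<pi> permutes ?L a} = fact (card (?L a))"
      by (rule card_permutations) (use assms in auto)
  qed
  finally show ?thesis .
qed

lemma fiber_card:
  assumes "\<tau>0 permutes {1..r}"
  shows "card {\<tau>. \<tau> permutes {1..r} \<and> J \<circ> \<tau> = J \<circ> \<tau>0} = vmult r J"
proof -
  let ?S = "{1..r::nat}"
  let ?St = "{\<sigma>. \<sigma> permutes ?S \<and> (\<forall>x\<in>?S. J (\<sigma> x) = J x)}"
  let ?F = "{\<tau>. \<tau> permutes ?S \<and> J \<circ> \<tau> = J \<circ> \<tau>0}"
  have inj: "inj_on (\<lambda>\<sigma>. \<sigma> \<circ> \<tau>0) ?St"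
  proof (rule inj_onI)
    fix \<sigma>1 \<sigma>2 assume "\<sigma>1 \<circ> \<tau>0 = \<sigma>2 \<circ> \<tau>0"
    then have "\<sigma>1 \<circ> \<tau>0 \<circ> inv \<tau>0 = \<sigma>2 \<circ> \<tau>0 \<circ> inv \<tau>0" by simp
    then show "\<sigma>1 = \<sigma>2" by (simp add: comp_assoc permutes_inv_o(1)[OF assms])
  qed
  have img: "(\<lambda>\<sigma>. \<sigma> \<circ> \<tau>0) ` ?St = ?F"
  proof
    show "(\<lambda>\<sigma>. \<sigma> \<circ> \<tau>0) ` ?St \<subseteq> ?F"
    proof
      fix \<tau> assume "\<tau> \<in> (\<lambda>\<sigma>. \<sigma> \<circ> \<tau>0) ` ?St"
      then obtain \<sigma> where s: "\<sigma> \<in> ?St" "\<tau> = \<sigma> \<circ> \<tau>0" by blast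
      have "J \<circ> \<sigma> = J"
      proof
        fix x show "(J \<circ> \<sigma>) x = J x"
          using s(1) permutes_not_in[of \<sigma> ?S x] by (cases "x \<in> ?S") auto
      qed
      then have "J \<circ> \<tau> = J \<circ> \<tau>0" unfolding s(2) by (simp add: comp_assoc[symmetric])
      moreover have "\<tau> permutes ?S" using s permutes_compose[OF assms] by auto
      ultimately show "\<tau> \<in> ?F" by simp
    qed
  next
    show "?F \<subseteq> (\<lambda>\<sigma>. \<sigma> \<circ> \<tau>0) ` ?St"
    proof
      fix \<tau> assume t: "\<tau> \<in> ?F"
      let ?\<sigma> = "\<tau> \<circ> inv \<tau>0"
      have "?\<sigma> permutes ?S" using t permutes_compose[OF permutes_inv[OF assms]] by auto
      moreover have "\<forall>x\<in>?S. J (?\<sigma> x) = J x"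
      proof
        fix x
        have "J \<circ> \<tau> = J \<circ> \<tau>0" using t by simp
        then have "J (\<tau> (inv \<tau>0 x)) = J (\<tau>0 (inv \<tau>0 x))" by (simp add: fun_eq_iff)
        then show "J (?\<sigma> x) = J x" by (simp add: permutes_inverses(1)[OF assms])
      qed
      moreover have "\<tau> = ?\<sigma> \<circ> \<tau>0" by (simp add: comp_assoc permutes_inv_o(2)[OF assms])
      ultimately show "\<tau> \<in> (\<lambda>\<sigma>. \<sigma> \<circ> \<tau>0) ` ?St" by blast
    qed
  qed
  have "card ?F = card ?St" using card_image[OF inj] img by simp
  also have "\<dots> = vmult r J" unfolding vmult_def by (rule stab_card) simp
  finally show ?thesis .
qed



lemma alg_manin:
  fixes X1 X2 X3 X4 :: "'a::complex_algebra_1"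
  assumes "X1 - (c * d) *\<^sub>C X2 + d *\<^sub>C X3 - c *\<^sub>C X4 = 0" "c' * c = 1"
  shows "X4 + d *\<^sub>C X2 = c' *\<^sub>C (X1 + d *\<^sub>C X3)"
proof -
  have "X1 + d *\<^sub>C X3 = (c * d) *\<^sub>C X2 + c *\<^sub>C X4"
    using assms(1) by (simp add: algebra_simps)
  then have "c' *\<^sub>C (X1 + d *\<^sub>C X3) = c' *\<^sub>C ((c * d) *\<^sub>C X2 + c *\<^sub>C X4)" by simp
  also have "\<dots> = (c' * c * d) *\<^sub>C X2 + (c' * c) *\<^sub>C X4"
    by (simp add: scaleC_add_right scaleC_scaleC mult.assoc)
  also have "\<dots> = d *\<^sub>C X2 + X4" using assms(2) by (simp add: scaleC_one)
  finally show ?thesis by (simp add: add.commute)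
qed

lemma alg_col:
  fixes X1 X4 :: "'a::complex_algebra_1"
  assumes "X1 = c *\<^sub>C X4" "c' * c = 1"
  shows "X4 + 1 *\<^sub>C X4 = c' *\<^sub>C (X1 + 1 *\<^sub>C X1)"
proof -
  have "c' *\<^sub>C (X1 + 1 *\<^sub>C X1) = c' *\<^sub>C (c *\<^sub>C X4 + c *\<^sub>C X4)" using assms(1) by (simp add: scaleC_one)
  also have "\<dots> = (c' * c) *\<^sub>C X4 + (c' * c) *\<^sub>C X4" by (simp add: scaleC_add_right scaleC_scaleC)
  finally show ?thesis using assms(2) by (simp add: scaleC_one)
qed

lemma prod_list_split3:
  assumes "1 \<le> t" "t < r"
  shows "prod_list (map f [1..<r+1]) =
     prod_list (map f [1..<t]) * (f t * f (Suc t)) * prod_list (map f [Suc (Suc t)..<r+1])"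
proof -
  have "[1..<r+1] = [1..<t] @ [t..<r+1]" using assms
    using upt_add_eq_append[of 1 t "r+1-t"] by simp
  moreover have "[t..<r+1] = t # Suc t # [Suc (Suc t)..<r+1]" using assms
    by (simp add: upt_conv_Cons)
  ultimately show ?thesis by (simp add: mult.assoc)
qed

lemma T_decomp:
  assumes "1 \<le> t" "t < r"
    and "\<And>u. u \<noteq> t \<Longrightarrow> u \<noteq> Suc t \<Longrightarrow> f u = g u"
  shows "prod_list (map g [1..<r+1]) =
     prod_list (map f [1..<t]) * (g t * g (Suc t)) * prod_list (map f [Suc (Suc t)..<r+1])"
proof -
  have e1: "map g [1..<t] = map f [1..<t]" using assms(3) by (intro map_cong) auto
  have e2: "map g [Suc (Suc t)..<r+1] = map f [Suc (Suc t)..<r+1]" using assms(3) by (intro map_cong) auto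
  show ?thesis using prod_list_split3[OF assms(1,2), of g] unfolding e1 e2 .
qed

lemma mid_identity:
  fixes N :: "nat \<Rightarrow> nat \<Rightarrow> 'a::complex_algebra_1"
  assumes q: "parametric_mat m q" and p: "parametric_mat s p" and man: "manin m s q p N"
    and ab: "a \<in> {1..m}" "b \<in> {1..m}" "a < b"
    and kl: "k \<in> {1..s}" "l \<in> {1..s}" "k \<le> l"
  shows "N b k * N a l + p k l *\<^sub>C (N b l * N a k) = q a b *\<^sub>C (N a k * N b l + p k l *\<^sub>C (N a l * N b k))"
proof -
  have qq: "q a b * q b a = 1" using q ab unfolding parametric_mat_def by auto
  show ?thesis
  proof (cases "k < l")
    case True
    have "N a k * N b l - (q b a * p k l) *\<^sub>C (N b l * N a k) + p k l *\<^sub>C (N a l * N b k) - q b a *\<^sub>C (N b k * N a l) = 0"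
      using man ab kl True unfolding manin_def by blast
    from alg_manin[OF this qq] show ?thesis .
  next
    case False
    then have kl': "l = k" using kl by simp
    have pk: "p k k = 1" using p kl unfolding parametric_mat_def by auto
    have "N a k * N b k = q b a *\<^sub>C (N b k * N a k)"
      using man ab kl unfolding manin_def by blast
    from alg_col[OF this qq] show ?thesis using kl' pk by simp
  qed
qed

lemma lin_comb:
  fixes A X Y B :: "'a::complex_algebra_1"
  shows "mu0 *\<^sub>C (A * X * B) + (d * mu0) *\<^sub>C (A * Y * B) = mu0 *\<^sub>C (A * (X + d *\<^sub>C Y) * B)"
  by (simp add: distrib_left distrib_right mult_scaleC_left mult_scaleC_right scaleC_add_right scaleC_scaleC mult.commute)

lemma scaleC_pull:
  fixes A V B :: "'a::complex_algebra_1"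
  shows "c *\<^sub>C (mu0 *\<^sub>C (A * V * B)) = mu0 *\<^sub>C (A * (c *\<^sub>C V) * B)"
  by (simp add: mult_scaleC_left mult_scaleC_right scaleC_scaleC mult.commute)

lemma double_cancel:
  fixes x y :: "'a::complex_algebra_1"
  assumes "x + x = c *\<^sub>C (y + y)"
  shows "x = c *\<^sub>C y"
proof -
  have d: "z + z = (2::complex) *\<^sub>C z" for z :: 'a
    by (metis one_add_one scaleC_add_left scaleC_one)
  have "(2::complex) *\<^sub>C x = (2::complex) *\<^sub>C (c *\<^sub>C y)" using assms unfolding d by (simp add: scaleC_scaleC mult.commute)
  then have "(1/2::complex) *\<^sub>C ((2::complex) *\<^sub>C x) = (1/2::complex) *\<^sub>C ((2::complex) *\<^sub>C (c *\<^sub>C y))" by simp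
  then show ?thesis by (simp add: scaleC_scaleC scaleC_one)
qed

lemma sum_perm_swap:
  assumes "1 \<le> t" "t < r"
  shows "(\<Sum>\<sigma>\<in>{\<sigma>. \<sigma> permutes {1..r}}. h (\<sigma> \<circ> Transposition.transpose t (Suc t))) =
         (\<Sum>\<sigma>\<in>{\<sigma>. \<sigma> permutes {1..r}}. h \<sigma>)"
proof (rule sum.reindex_bij_witness[where i="\<lambda>\<sigma>. \<sigma> \<circ> Transposition.transpose t (Suc t)"
      and j="\<lambda>\<sigma>. \<sigma> \<circ> Transposition.transpose t (Suc t)"])
  have sp: "Transposition.transpose t (Suc t) permutes {1..r}" by (rule transp_permutes[OF assms])
  show "\<And>a. a \<in> {\<sigma>. \<sigma> permutes {1..r}} \<Longrightarrow> a \<circ> Transposition.transpose t (Suc t) \<circ> Transposition.transpose t (Suc t) = a"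
    by (rule comp_transp_invol)
  show "\<And>a. a \<in> {\<sigma>. \<sigma> permutes {1..r}} \<Longrightarrow> a \<circ> Transposition.transpose t (Suc t) \<in> {\<sigma>. \<sigma> permutes {1..r}}"
    using permutes_compose[OF sp] by auto
  show "\<And>a. a \<in> {\<sigma>. \<sigma> permutes {1..r}} \<Longrightarrow> a \<circ> Transposition.transpose t (Suc t) \<circ> Transposition.transpose t (Suc t) = a"
    by (rule comp_transp_invol)
  show "\<And>a. a \<in> {\<sigma>. \<sigma> permutes {1..r}} \<Longrightarrow> a \<circ> Transposition.transpose t (Suc t) \<in> {\<sigma>. \<sigma> permutes {1..r}}"
    using permutes_compose[OF sp] by auto
qed simp

definition TT :: "(nat \<Rightarrow> nat \<Rightarrow> complex) \<Rightarrow> nat \<Rightarrow> (nat \<Rightarrow> nat \<Rightarrow> 'a::complex_algebra_1) \<Rightarrow> (nat \<Rightarrow> nat) \<Rightarrow> (nat \<Rightarrow> nat) \<Rightarrow> (nat \<Rightarrow> nat) \<Rightarrow> 'a" where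
  "TT p r N G K \<sigma> = mu p r K \<sigma> *\<^sub>C prod_list (map (\<lambda>u. N (G u) (K (\<sigma> u))) [1..<r+1])"

lemma rper_TT: "rper p r N G K = (\<Sum>\<sigma>\<in>{\<sigma>. \<sigma> permutes {1..r}}. TT p r N G K \<sigma>)"
  unfolding rper_def TT_def by simp

lemma pc_lt:
  fixes N :: "nat \<Rightarrow> nat \<Rightarrow> 'a::complex_algebra_1"
  assumes q: "parametric_mat m q" and p: "parametric_mat s p" and man: "manin m s q p N"
    and t: "1 \<le> t" "t < r"
    and F: "F t \<in> {1..m}" "F (Suc t) \<in> {1..m}" "F (Suc t) < F t"
    and K: "nondecr r K" "\<forall>u\<in>{1..r}. K u \<in> {1..s}"
    and \<sigma>: "\<sigma> permutes {1..r}" "\<sigma> t < \<sigma> (Suc t)"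
  shows "TT p r N F K \<sigma> + TT p r N F K (\<sigma> \<circ> Transposition.transpose t (Suc t)) =
     q (F (Suc t)) (F t) *\<^sub>C (TT p r N (F \<circ> Transposition.transpose t (Suc t)) K \<sigma> +
        TT p r N (F \<circ> Transposition.transpose t (Suc t)) K (\<sigma> \<circ> Transposition.transpose t (Suc t)))"
proof -
  let ?s = "Transposition.transpose t (Suc t)"
  define a where "a = F (Suc t)"
  define b where "b = F t"
  define k where "k = K (\<sigma> t)"
  define l where "l = K (\<sigma> (Suc t))"
  define f where "f = (\<lambda>u. N (F u) (K (\<sigma> u)))"
  define Pre where "Pre = prod_list (map f [1..<t])"
  define Post where "Post = prod_list (map f [Suc (Suc t)..<r+1])"
  have st: "\<sigma> t \<in> {1..r}" "\<sigma> (Suc t) \<in> {1..r}" using t permutes_in_image[OF \<sigma>(1)] by auto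
  have kl: "k \<le> l" using K(1) st \<sigma>(2) unfolding nondecr_def k_def l_def by auto
  have ks: "k \<in> {1..s}" "l \<in> {1..s}" using K(2) st unfolding k_def l_def by auto
  have mus: "mu p r K (\<sigma> \<circ> ?s) = p k l * mu p r K \<sigma>"
    using mu_swap[OF t, of \<sigma> p K] \<sigma>(2) unfolding k_def l_def by simp
  have so: "u \<noteq> t \<Longrightarrow> u \<noteq> Suc t \<Longrightarrow> ?s u = u" for u by simp
  have T1: "TT p r N F K \<sigma> = mu p r K \<sigma> *\<^sub>C (Pre * (N b k * N a l) * Post)"
    unfolding TT_def Pre_def Post_def
    by (subst T_decomp[OF t, of f]) (auto simp: f_def a_def b_def k_def l_def)
  have T2: "TT p r N F K (\<sigma> \<circ> ?s) = mu p r K (\<sigma> \<circ> ?s) *\<^sub>C (Pre * (N b l * N a k) * Post)"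
    unfolding TT_def Pre_def Post_def
    by (subst T_decomp[OF t, of f]) (auto simp: f_def a_def b_def k_def l_def)
  have T3: "TT p r N (F \<circ> ?s) K \<sigma> = mu p r K \<sigma> *\<^sub>C (Pre * (N a k * N b l) * Post)"
    unfolding TT_def Pre_def Post_def
    by (subst T_decomp[OF t, of f]) (auto simp: f_def a_def b_def k_def l_def)
  have T4: "TT p r N (F \<circ> ?s) K (\<sigma> \<circ> ?s) = mu p r K (\<sigma> \<circ> ?s) *\<^sub>C (Pre * (N a l * N b k) * Post)"
    unfolding TT_def Pre_def Post_def
    by (subst T_decomp[OF t, of f]) (auto simp: f_def a_def b_def k_def l_def)
  have mid: "N b k * N a l + p k l *\<^sub>C (N b l * N a k) = q a b *\<^sub>C (N a k * N b l + p k l *\<^sub>C (N a l * N b k))"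
    by (rule mid_identity[OF q p man _ _ _ ks kl]) (use F in \<open>auto simp: a_def b_def\<close>)
  show ?thesis
    unfolding T1 T2 T3 T4 mus lin_comb scaleC_pull a_def[symmetric] b_def[symmetric] mid ..
qed

lemma manin_swap:
  fixes N :: "nat \<Rightarrow> nat \<Rightarrow> 'a::complex_algebra_1"
  assumes q: "parametric_mat m q" and p: "parametric_mat s p" and man: "manin m s q p N"
    and t: "1 \<le> t" "t < r"
    and F: "F t \<in> {1..m}" "F (Suc t) \<in> {1..m}" "F (Suc t) < F t"
    and K: "nondecr r K" "\<forall>u\<in>{1..r}. K u \<in> {1..s}"
  shows "rper p r N F K = q (F (Suc t)) (F t) *\<^sub>C rper p r N (F \<circ> Transposition.transpose t (Suc t)) K"
proof -
  let ?s = "Transposition.transpose t (Suc t)"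
  let ?P = "{\<sigma>. \<sigma> permutes {1..r}}"
  let ?c = "q (F (Suc t)) (F t)"
  have pc: "TT p r N F K \<sigma> + TT p r N F K (\<sigma> \<circ> ?s) =
     ?c *\<^sub>C (TT p r N (F \<circ> ?s) K \<sigma> + TT p r N (F \<circ> ?s) K (\<sigma> \<circ> ?s))" if \<sigma>: "\<sigma> \<in> ?P" for \<sigma>
  proof -
    have sp: "\<sigma> permutes {1..r}" using \<sigma> by simp
    have ne: "\<sigma> t \<noteq> \<sigma> (Suc t)" using permutes_inj[OF sp] by (auto dest: injD)
    show ?thesis
    proof (cases "\<sigma> t < \<sigma> (Suc t)")
      case True
      show ?thesis by (rule pc_lt[OF q p man t F K sp True])
    next
      case False
      then have lt: "(\<sigma> \<circ> ?s) t < (\<sigma> \<circ> ?s) (Suc t)" using ne by simp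
      have sp2: "\<sigma> \<circ> ?s permutes {1..r}" using permutes_compose[OF transp_permutes[OF t] sp] .
      have e: "\<sigma> \<circ> ?s \<circ> ?s = \<sigma>" by (rule comp_transp_invol)
      from pc_lt[OF q p man t F K sp2 lt, unfolded e] show ?thesis
        by (simp only: add.commute)
    qed
  qed
  have "rper p r N F K + rper p r N F K = (\<Sum>\<sigma>\<in>?P. TT p r N F K \<sigma> + TT p r N F K (\<sigma> \<circ> ?s))"
    unfolding rper_TT sum.distrib sum_perm_swap[OF t, of "TT p r N F K"] ..
  also have "\<dots> = (\<Sum>\<sigma>\<in>?P. ?c *\<^sub>C (TT p r N (F \<circ> ?s) K \<sigma> + TT p r N (F \<circ> ?s) K (\<sigma> \<circ> ?s)))"
    by (rule sum.cong[OF refl pc])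
  also have "\<dots> = ?c *\<^sub>C (rper p r N (F \<circ> ?s) K + rper p r N (F \<circ> ?s) K)"
    unfolding rper_TT scaleC_sum_right[symmetric] sum.distrib sum_perm_swap[OF t, of "TT p r N (F \<circ> ?s) K"] ..
  finally show ?thesis by (rule double_cancel)
qed



lemma rper_cong:
  assumes "\<forall>u\<in>{1..r}. F u = G u"
  shows "rper p r N F K = rper p r N G K"
proof -
  have e: "map (\<lambda>t. N (F t) (K (\<sigma> t))) [1..<r+1] = map (\<lambda>t. N (G t) (K (\<sigma> t))) [1..<r+1]" for \<sigma>
    by (rule map_cong) (use assms in auto)
  show ?thesis unfolding rper_def by (simp only: e)
qed

lemma key_lemma:
  fixes N :: "nat \<Rightarrow> nat \<Rightarrow> 'a::complex_algebra_1"
  assumes q: "parametric_mat m q" and p: "parametric_mat s p" and man: "manin m s q p N"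
    and J: "nondecr r J" "\<forall>u\<in>{1..r}. J u \<in> {1..m}"
    and K: "nondecr r K" "\<forall>u\<in>{1..r}. K u \<in> {1..s}"
    and \<tau>: "\<tau> permutes {1..r}"
  shows "rper p r N (J \<circ> \<tau>) K = mu q r J \<tau> *\<^sub>C rper p r N J K"
  using \<tau>
proof (induction "card (invs r \<tau>)" arbitrary: \<tau> rule: less_induct)
  case less
  show ?case
  proof (cases "invs r \<tau> = {}")
    case True
    have mu1: "mu q r J \<tau> = 1" unfolding mu_invs True by simp
    have tn: "nondecr r \<tau>" using True by (rule invs_empty_nondecr)
    have "nondecr r (J \<circ> \<tau>)" unfolding nondecr_def
    proof (intro ballI impI)
      fix a b assume ab: "a \<in> {1..r}" "b \<in> {1..r}" "a \<le> b"
      then have "\<tau> a \<le> \<tau> b" using tn unfolding nondecr_def by blast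
      moreover have "\<tau> a \<in> {1..r}" "\<tau> b \<in> {1..r}" using ab permutes_in_image[OF less.prems] by auto
      ultimately show "(J \<circ> \<tau>) a \<le> (J \<circ> \<tau>) b" using J(1) unfolding nondecr_def by simp
    qed
    then have "\<forall>u\<in>{1..r}. (J \<circ> \<tau>) u = J u" using nondecr_perm_eq[OF J(1) _ less.prems] by simp
    then show ?thesis using rper_cong mu1 by (metis scaleC_one)
  next
    case False
    obtain t where t: "1 \<le> t" "t < r" "\<tau> (Suc t) < \<tau> t" using descent_exists[OF False] by blast
    let ?s = "Transposition.transpose t (Suc t)"
    define \<tau>' where "\<tau>' = \<tau> \<circ> ?s"
    have tt: "\<tau>' \<circ> ?s = \<tau>" unfolding \<tau>'_def by (rule comp_transp_invol)
    have lt: "\<tau>' t < \<tau>' (Suc t)" using t by (simp add: \<tau>'_def)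
    have "card (invs r \<tau>) = Suc (card (invs r \<tau>'))"
      using card_invs_swap[OF t(1,2) lt] tt by simp
    then have lt2: "card (invs r \<tau>') < card (invs r \<tau>)" by simp
    have sp: "?s permutes {1..r}" by (rule transp_permutes[OF t(1,2)])
    have tp: "\<tau>' permutes {1..r}" unfolding \<tau>'_def by (rule permutes_compose[OF sp less.prems])
    have IH: "rper p r N (J \<circ> \<tau>') K = mu q r J \<tau>' *\<^sub>C rper p r N J K" by (rule less.hyps[OF lt2 tp])
    have mus: "mu q r J \<tau> = q (J (\<tau>' t)) (J (\<tau>' (Suc t))) * mu q r J \<tau>'"
      using mu_swap[OF t(1,2), of \<tau>' q J] lt tt by simp
    have ins: "\<tau>' t \<in> {1..r}" "\<tau>' (Suc t) \<in> {1..r}" using t permutes_in_image[OF tp] by auto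
    have le: "J (\<tau>' t) \<le> J (\<tau>' (Suc t))" using J(1) ins lt unfolding nondecr_def by simp
    have inm: "J (\<tau>' t) \<in> {1..m}" "J (\<tau>' (Suc t)) \<in> {1..m}" using J(2) ins by auto
    show ?thesis
    proof (cases "J (\<tau>' t) = J (\<tau>' (Suc t))")
      case True
      have q1: "q (J (\<tau>' t)) (J (\<tau>' (Suc t))) = 1" using q inm True unfolding parametric_mat_def by simp
      have "\<forall>u\<in>{1..r}. (J \<circ> \<tau>) u = (J \<circ> \<tau>') u"
      proof
        fix u assume "u \<in> {1..r}"
        show "(J \<circ> \<tau>) u = (J \<circ> \<tau>') u"
          unfolding tt[symmetric] using True by (cases "u = t"; cases "u = Suc t") auto
      qed
      then have "rper p r N (J \<circ> \<tau>) K = rper p r N (J \<circ> \<tau>') K" by (rule rper_cong)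
      then show ?thesis using IH mus q1 by simp
    next
      case False
      let ?F = "J \<circ> \<tau>"
      have F: "?F t \<in> {1..m}" "?F (Suc t) \<in> {1..m}" "?F (Suc t) < ?F t"
        using inm le False unfolding tt[symmetric] by auto
      have "rper p r N ?F K = q (?F (Suc t)) (?F t) *\<^sub>C rper p r N (?F \<circ> ?s) K"
        by (rule manin_swap[OF q p man t(1,2) F K])
      also have "?F \<circ> ?s = J \<circ> \<tau>'" unfolding \<tau>'_def by (simp add: comp_assoc)
      also have "q (?F (Suc t)) (?F t) = q (J (\<tau>' t)) (J (\<tau>' (Suc t)))" unfolding tt[symmetric] by simp
      finally have X: "rper p r N (J \<circ> \<tau>) K = q (J (\<tau>' t)) (J (\<tau>' (Suc t))) *\<^sub>C rper p r N (J \<circ> \<tau>') K" .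
      show ?thesis by (simp only: X IH mus scaleC_scaleC)
    qed
  qed
qed



lemma commute_prod:
  fixes b :: "'a::ring_1"
  assumes "\<forall>y\<in>set xs. b * a y = a y * b"
  shows "b * prod_list (map a xs) = prod_list (map a xs) * b"
  using assms
proof (induction xs)
  case (Cons x xs)
  have "b * prod_list (map a (x # xs)) = (b * a x) * prod_list (map a xs)" by (simp add: mult.assoc)
  also have "\<dots> = a x * (b * prod_list (map a xs))" using Cons.prems by (simp add: mult.assoc)
  also have "\<dots> = a x * (prod_list (map a xs) * b)" using Cons by simp
  finally show ?case by (simp add: mult.assoc)
qed simp

lemma prod_list_mult_comm:
  fixes a b :: "nat \<Rightarrow> 'a::ring_1"
  assumes "\<forall>x\<in>set xs. \<forall>y\<in>set xs. b x * a y = a y * b x"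
  shows "prod_list (map (\<lambda>t. a t * b t) xs) = prod_list (map a xs) * prod_list (map b xs)"
  using assms
proof (induction xs)
  case (Cons x xs)
  have h: "\<forall>x\<in>set xs. \<forall>y\<in>set xs. b x * a y = a y * b x" using Cons.prems by simp
  have c: "b x * prod_list (map a xs) = prod_list (map a xs) * b x"
    by (rule commute_prod) (use Cons.prems in simp)
  have "prod_list (map (\<lambda>t. a t * b t) (x # xs)) = a x * b x * (prod_list (map a xs) * prod_list (map b xs))"
    using Cons.IH[OF h] by simp
  also have "\<dots> = a x * (b x * prod_list (map a xs)) * prod_list (map b xs)" by (simp add: mult.assoc)
  also have "\<dots> = a x * (prod_list (map a xs) * b x) * prod_list (map b xs)" by (simp only: c)
  finally show ?case by (simp add: mult.assoc)
qed simp

lemma prod_list_sum: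
  fixes f :: "nat \<Rightarrow> nat \<Rightarrow> 'a::ring_1"
  assumes "distinct xs" "finite A"
  shows "prod_list (map (\<lambda>t. \<Sum>j\<in>A. f t j) xs) = (\<Sum>g\<in>(set xs \<rightarrow>\<^sub>E A). prod_list (map (\<lambda>t. f t (g t)) xs))"
  using assms(1)
proof (induction xs)
  case Nil
  then show ?case by simp
next
  case (Cons x xs)
  have nx: "x \<notin> set xs" using Cons.prems by simp
  have fin: "finite (set xs \<rightarrow>\<^sub>E A)" using assms(2) by (simp add: finite_PiE)
  have "prod_list (map (\<lambda>t. \<Sum>j\<in>A. f t j) (x # xs)) =
        (\<Sum>j\<in>A. f x j) * (\<Sum>g\<in>(set xs \<rightarrow>\<^sub>E A). prod_list (map (\<lambda>t. f t (g t)) xs))"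
    using Cons by simp
  also have "\<dots> = (\<Sum>j\<in>A. \<Sum>g\<in>(set xs \<rightarrow>\<^sub>E A). f x j * prod_list (map (\<lambda>t. f t (g t)) xs))"
    by (simp only: sum_distrib_right) (simp only: sum_distrib_left)
  also have "\<dots> = (\<Sum>(j, g)\<in>A \<times> (set xs \<rightarrow>\<^sub>E A). f x j * prod_list (map (\<lambda>t. f t (g t)) xs))"
    by (rule sum.cartesian_product)
  also have "\<dots> = (\<Sum>(j, g)\<in>A \<times> (set xs \<rightarrow>\<^sub>E A). prod_list (map (\<lambda>t. f t ((g(x := j)) t)) (x # xs)))"
  proof (rule sum.cong[OF refl])
    fix z assume "z \<in> A \<times> (set xs \<rightarrow>\<^sub>E A)"
    obtain j g where z: "z = (j, g)" by (cases z)
    have e: "map (\<lambda>t. f t ((g(x := j)) t)) xs = map (\<lambda>t. f t (g t)) xs"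
      by (rule map_cong) (use nx in auto)
    have "prod_list (map (\<lambda>t. f t ((g(x := j)) t)) (x # xs)) = f x j * prod_list (map (\<lambda>t. f t (g t)) xs)"
      by (simp only: list.map prod_list.Cons e) simp
    then show "(case z of (j, g) \<Rightarrow> f x j * prod_list (map (\<lambda>t. f t (g t)) xs)) =
          (case z of (j, g) \<Rightarrow> prod_list (map (\<lambda>t. f t ((g(x := j)) t)) (x # xs)))"
      unfolding z by (simp only: prod.case)
  qed
  also have "\<dots> = (\<Sum>h\<in>(\<lambda>(y, g). g(x := y)) ` (A \<times> (set xs \<rightarrow>\<^sub>E A)). prod_list (map (\<lambda>t. f t (h t)) (x # xs)))"
    by (subst sum.reindex[OF inj_combinator[OF nx]]) (simp add: case_prod_unfold)
  also have "(\<lambda>(y, g). g(x := y)) ` (A \<times> (set xs \<rightarrow>\<^sub>E A)) = (set (x # xs) \<rightarrow>\<^sub>E A)"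
    by (simp add: PiE_insert_eq)
  finally show ?case .
qed

definition Mw :: "(nat \<Rightarrow> nat \<Rightarrow> 'a::complex_algebra_1) \<Rightarrow> (nat \<Rightarrow> nat) \<Rightarrow> nat \<Rightarrow> (nat \<Rightarrow> nat) \<Rightarrow> 'a" where
  "Mw M I r g = prod_list (map (\<lambda>t. M (I t) (g t)) [1..<r+1])"

lemma E1:
  fixes M N :: "nat \<Rightarrow> nat \<Rightarrow> 'a::complex_algebra_1"
  assumes comm: "\<forall>i\<in>{1..m}. \<forall>j\<in>{1..s}. \<forall>k\<in>{1..n}. \<forall>l\<in>{1..m}. N i j * M k l = M k l * N i j"
    and I: "\<forall>t\<in>{1..r}. I t \<in> {1..n}" and K: "\<forall>t\<in>{1..r}. K t \<in> {1..s}"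
  shows "rper p r (matmul m M N) I K = (\<Sum>g\<in>{1..r} \<rightarrow>\<^sub>E {1..m}. Mw M I r g * rper p r N g K)"
proof -
  let ?P = "{\<sigma>. \<sigma> permutes {1..r}}"
  let ?G = "{1..r} \<rightarrow>\<^sub>E {1..m}"
  have st: "set [1..<r+1] = {1..r}" by auto
  have step: "prod_list (map (\<lambda>t. matmul m M N (I t) (K (\<sigma> t))) [1..<r+1]) =
      (\<Sum>g\<in>?G. Mw M I r g * prod_list (map (\<lambda>t. N (g t) (K (\<sigma> t))) [1..<r+1]))"
    if \<sigma>: "\<sigma> \<in> ?P" for \<sigma>
  proof -
    have "prod_list (map (\<lambda>t. matmul m M N (I t) (K (\<sigma> t))) [1..<r+1]) =
        (\<Sum>g\<in>?G. prod_list (map (\<lambda>t. M (I t) (g t) * N (g t) (K (\<sigma> t))) [1..<r+1]))"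
      unfolding matmul_def using prod_list_sum[of "[1..<r+1]" "{1..m}" "\<lambda>t j. M (I t) j * N j (K (\<sigma> t))"]
      by (simp only: st distinct_upt finite_atLeastAtMost simp_thms)
    also have "\<dots> = (\<Sum>g\<in>?G. Mw M I r g * prod_list (map (\<lambda>t. N (g t) (K (\<sigma> t))) [1..<r+1]))"
    proof (rule sum.cong[OF refl])
      fix g assume g: "g \<in> ?G"
      have "\<forall>x\<in>set [1..<r+1]. \<forall>y\<in>set [1..<r+1]. N (g x) (K (\<sigma> x)) * M (I y) (g y) = M (I y) (g y) * N (g x) (K (\<sigma> x))"
      proof (intro ballI)
        fix x y assume "x \<in> set [1..<r+1]" "y \<in> set [1..<r+1]"
        then have xy: "x \<in> {1..r}" "y \<in> {1..r}" by auto
        have "\<sigma> x \<in> {1..r}" using xy permutes_in_image[of \<sigma> "{1..r}" x] \<sigma> by auto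
        then have "K (\<sigma> x) \<in> {1..s}" using K by blast
        moreover have "g x \<in> {1..m}" "g y \<in> {1..m}" using g xy by auto
        moreover have "I y \<in> {1..n}" using I xy by blast
        ultimately show "N (g x) (K (\<sigma> x)) * M (I y) (g y) = M (I y) (g y) * N (g x) (K (\<sigma> x))"
          using comm by blast
      qed
      then show "prod_list (map (\<lambda>t. M (I t) (g t) * N (g t) (K (\<sigma> t))) [1..<r+1]) =
           Mw M I r g * prod_list (map (\<lambda>t. N (g t) (K (\<sigma> t))) [1..<r+1])"
        unfolding Mw_def by (rule prod_list_mult_comm)
    qed
    finally show ?thesis .
  qed
  have "rper p r (matmul m M N) I K =
     (\<Sum>\<sigma>\<in>?P. mu p r K \<sigma> *\<^sub>C (\<Sum>g\<in>?G. Mw M I r g * prod_list (map (\<lambda>t. N (g t) (K (\<sigma> t))) [1..<r+1])))"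
    unfolding rper_def
  proof (rule sum.cong[OF refl])
    fix \<sigma> assume "\<sigma> \<in> ?P"
    then show "mu p r K \<sigma> *\<^sub>C prod_list (map (\<lambda>t. matmul m M N (I t) (K (\<sigma> t))) [1..<r+1]) =
      mu p r K \<sigma> *\<^sub>C (\<Sum>g\<in>?G. Mw M I r g * prod_list (map (\<lambda>t. N (g t) (K (\<sigma> t))) [1..<r+1]))"
      by (simp only: step)
  qed
  also have "\<dots> = (\<Sum>\<sigma>\<in>?P. \<Sum>g\<in>?G. Mw M I r g * (mu p r K \<sigma> *\<^sub>C prod_list (map (\<lambda>t. N (g t) (K (\<sigma> t))) [1..<r+1])))"
    by (simp add: scaleC_sum_right mult_scaleC_right)
  also have "\<dots> = (\<Sum>g\<in>?G. \<Sum>\<sigma>\<in>?P. Mw M I r g * (mu p r K \<sigma> *\<^sub>C prod_list (map (\<lambda>t. N (g t) (K (\<sigma> t))) [1..<r+1])))"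
    by (rule sum.swap)
  also have "\<dots> = (\<Sum>g\<in>?G. Mw M I r g * rper p r N g K)"
    unfolding rper_def by (simp add: sum_distrib_left)
  finally show ?thesis .
qed



lemma E2:
  fixes M N :: "nat \<Rightarrow> nat \<Rightarrow> 'a::complex_algebra_1"
  assumes q: "parametric_mat m q" and p: "parametric_mat s p" and man: "manin m s q p N"
    and J: "J \<in> nondecr_indices r m"
    and K: "nondecr r K" "\<forall>u\<in>{1..r}. K u \<in> {1..s}"
  shows "rper q r M I J * rper p r N J K =
         (\<Sum>\<tau>\<in>{\<tau>. \<tau> permutes {1..r}}. Mw M I r (J \<circ> \<tau>) * rper p r N (J \<circ> \<tau>) K)"
proof -
  have J': "nondecr r J" "\<forall>u\<in>{1..r}. J u \<in> {1..m}" using J by (auto simp: nondecr_indices_def)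
  have "rper q r M I J = (\<Sum>\<tau>\<in>{\<tau>. \<tau> permutes {1..r}}. mu q r J \<tau> *\<^sub>C Mw M I r (J \<circ> \<tau>))"
    unfolding rper_def Mw_def by simp
  then have "rper q r M I J * rper p r N J K =
      (\<Sum>\<tau>\<in>{\<tau>. \<tau> permutes {1..r}}. (mu q r J \<tau> *\<^sub>C Mw M I r (J \<circ> \<tau>)) * rper p r N J K)"
    by (simp add: sum_distrib_right)
  also have "\<dots> = (\<Sum>\<tau>\<in>{\<tau>. \<tau> permutes {1..r}}. Mw M I r (J \<circ> \<tau>) * rper p r N (J \<circ> \<tau>) K)"
  proof (rule sum.cong[OF refl])
    fix \<tau> assume "\<tau> \<in> {\<tau>. \<tau> permutes {1..r}}"
    then have "rper p r N (J \<circ> \<tau>) K = mu q r J \<tau> *\<^sub>C rper p r N J K"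
      using key_lemma[OF q p man J' K] by simp
    then show "(mu q r J \<tau> *\<^sub>C Mw M I r (J \<circ> \<tau>)) * rper p r N J K = Mw M I r (J \<circ> \<tau>) * rper p r N (J \<circ> \<tau>) K"
      by (simp add: mult_scaleC_left mult_scaleC_right)
  qed
  finally show ?thesis .
qed

lemma vmult_pos: "vmult r J > 0"
  unfolding vmult_def by (rule prod_pos) auto

lemma orbit_sum:
  fixes \<Phi> :: "(nat \<Rightarrow> nat) \<Rightarrow> 'a::complex_algebra_1"
  shows "(\<Sum>\<tau>\<in>{\<tau>. \<tau> permutes {1..r}}. \<Phi> (J \<circ> \<tau>)) =
    (of_nat (vmult r J) :: complex) *\<^sub>C (\<Sum>g\<in>(\<lambda>\<tau>. J \<circ> \<tau>) ` {\<tau>. \<tau> permutes {1..r}}. \<Phi> g)"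
proof -
  let ?P = "{\<tau>. \<tau> permutes {1..r::nat}}"
  have fin: "finite ?P" by (rule finite_permutations) simp
  have "(\<Sum>\<tau>\<in>?P. \<Phi> (J \<circ> \<tau>)) = (\<Sum>y\<in>(\<lambda>\<tau>. J \<circ> \<tau>) ` ?P. \<Sum>\<tau>\<in>{\<tau>\<in>?P. J \<circ> \<tau> = y}. \<Phi> (J \<circ> \<tau>))"
    by (rule sum.image_gen[OF fin])
  also have "\<dots> = (\<Sum>y\<in>(\<lambda>\<tau>. J \<circ> \<tau>) ` ?P. of_nat (vmult r J) * \<Phi> y)"
  proof (rule sum.cong[OF refl])
    fix y assume "y \<in> (\<lambda>\<tau>. J \<circ> \<tau>) ` ?P"
    then obtain \<tau>0 where t0: "\<tau>0 permutes {1..r}" "y = J \<circ> \<tau>0" by blast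
    have "(\<Sum>\<tau>\<in>{\<tau>\<in>?P. J \<circ> \<tau> = y}. \<Phi> (J \<circ> \<tau>)) = (\<Sum>\<tau>\<in>{\<tau>\<in>?P. J \<circ> \<tau> = y}. \<Phi> y)"
      by (rule sum.cong) auto
    also have "\<dots> = of_nat (card {\<tau>\<in>?P. J \<circ> \<tau> = y}) * \<Phi> y" by simp
    also have "card {\<tau>\<in>?P. J \<circ> \<tau> = y} = vmult r J"
      using fiber_card[OF t0(1), of J] t0(2) by simp
    finally show "(\<Sum>\<tau>\<in>{\<tau>\<in>?P. J \<circ> \<tau> = y}. \<Phi> (J \<circ> \<tau>)) = of_nat (vmult r J) * \<Phi> y" .
  qed
  also have "\<dots> = (of_nat (vmult r J) :: complex) *\<^sub>C (\<Sum>g\<in>(\<lambda>\<tau>. J \<circ> \<tau>) ` ?P. \<Phi> g)"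
    by (simp add: of_nat_scaleC scaleC_sum_right)
  finally show ?thesis .
qed

lemma E3:
  fixes \<Phi> :: "(nat \<Rightarrow> nat) \<Rightarrow> 'a::complex_algebra_1"
  shows "(\<Sum>g\<in>{1..r} \<rightarrow>\<^sub>E {1..m}. \<Phi> g) =
    (\<Sum>J\<in>nondecr_indices r m. (1 / of_nat (vmult r J)) *\<^sub>C (\<Sum>\<tau>\<in>{\<tau>. \<tau> permutes {1..r}}. \<Phi> (J \<circ> \<tau>)))"
proof -
  let ?P = "{\<tau>. \<tau> permutes {1..r::nat}}"
  let ?ND = "nondecr_indices r m"
  let ?orb = "\<lambda>J. (\<lambda>\<tau>. J \<circ> \<tau>) ` ?P"
  have finP: "finite ?P" by (rule finite_permutations) simp
  have finND: "finite ?ND"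
    by (rule finite_subset[of _ "{1..r} \<rightarrow>\<^sub>E {1..m}"]) (auto simp: nondecr_indices_def finite_PiE)
  have U: "\<Union>(?orb ` ?ND) = {1..r} \<rightarrow>\<^sub>E {1..m}"
  proof
    show "\<Union>(?orb ` ?ND) \<subseteq> {1..r} \<rightarrow>\<^sub>E {1..m}"
    proof
      fix g assume "g \<in> \<Union>(?orb ` ?ND)"
      then obtain J \<tau> where h: "J \<in> ?ND" "\<tau> permutes {1..r}" "g = J \<circ> \<tau>" by blast
      have JP: "J \<in> {1..r} \<rightarrow>\<^sub>E {1..m}" using h(1) by (simp add: nondecr_indices_def)
      show "g \<in> {1..r} \<rightarrow>\<^sub>E {1..m}"
        unfolding h(3) using JP permutes_in_image[OF h(2)] permutes_not_in[OF h(2)]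
        by (auto simp: PiE_def Pi_def extensional_def)
    qed
  next
    show "{1..r} \<rightarrow>\<^sub>E {1..m} \<subseteq> \<Union>(?orb ` ?ND)"
    proof
      fix g assume "g \<in> {1..r} \<rightarrow>\<^sub>E {1..m}"
      from sort_exists[OF this] obtain J \<tau> where "J \<in> ?ND" "\<tau> permutes {1..r}" "g = J \<circ> \<tau>" by blast
      then show "g \<in> \<Union>(?orb ` ?ND)" by blast
    qed
  qed
  have disj: "\<forall>J\<in>?ND. \<forall>J'\<in>?ND. J \<noteq> J' \<longrightarrow> ?orb J \<inter> ?orb J' = {}"
  proof (intro ballI impI)
    fix J J' assume h: "J \<in> ?ND" "J' \<in> ?ND" "J \<noteq> J'"
    show "?orb J \<inter> ?orb J' = {}"
    proof (rule ccontr)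
      assume "?orb J \<inter> ?orb J' \<noteq> {}"
      then obtain \<tau> \<tau>' where "\<tau> permutes {1..r}" "\<tau>' permutes {1..r}" "J \<circ> \<tau> = J' \<circ> \<tau>'" by auto
      from sort_unique[OF h(1,2) this] h(3) show False by simp
    qed
  qed
  have "(\<Sum>g\<in>{1..r} \<rightarrow>\<^sub>E {1..m}. \<Phi> g) = (\<Sum>J\<in>?ND. \<Sum>g\<in>?orb J. \<Phi> g)"
    unfolding U[symmetric] by (rule sum.UNION_disjoint[OF finND _ disj]) (use finP in auto)
  also have "\<dots> = (\<Sum>J\<in>?ND. (1 / of_nat (vmult r J)) *\<^sub>C (\<Sum>\<tau>\<in>?P. \<Phi> (J \<circ> \<tau>)))"
  proof (rule sum.cong[OF refl])
    fix J
    have v: "(of_nat (vmult r J) :: complex) \<noteq> 0" using vmult_pos[of r J] by simp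
    show "(\<Sum>g\<in>?orb J. \<Phi> g) = (1 / of_nat (vmult r J)) *\<^sub>C (\<Sum>\<tau>\<in>?P. \<Phi> (J \<circ> \<tau>))"
      unfolding orbit_sum scaleC_scaleC using v by (simp add: scaleC_one)
  qed
  finally show ?thesis .
qed

lemma main_gen:
  fixes q p :: "nat \<Rightarrow> nat \<Rightarrow> complex"
    and M N :: "nat \<Rightarrow> nat \<Rightarrow> 'a::complex_algebra_1"
    and n m s r :: nat and I K :: "nat \<Rightarrow> nat"
  assumes q: "parametric_mat m q" and p: "parametric_mat s p"
    and man: "manin m s q p N"
    and comm: "\<forall>i\<in>{1..m}. \<forall>j\<in>{1..s}. \<forall>k\<in>{1..n}. \<forall>l\<in>{1..m}. N i j * M k l = M k l * N i j"
    and I: "\<forall>t\<in>{1..r}. I t \<in> {1..n}"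
    and K: "\<forall>t\<in>{1..r}. K t \<in> {1..s}" and Kn: "nondecr r K"
  shows "rper_hat p r (matmul m M N) I K =
           (\<Sum>J\<in>nondecr_indices r m. rper_hat q r M I J * rper_hat p r N J K)"
proof -
  let ?P = "{\<tau>. \<tau> permutes {1..r::nat}}"
  let ?\<Phi> = "\<lambda>g. Mw M I r g * rper p r N g K"
  have "rper_hat p r (matmul m M N) I K = (1 / of_nat (vmult r K)) *\<^sub>C (\<Sum>g\<in>{1..r} \<rightarrow>\<^sub>E {1..m}. ?\<Phi> g)"
    unfolding rper_hat_def E1[OF comm I K] ..
  also have "\<dots> = (1 / of_nat (vmult r K)) *\<^sub>C
      (\<Sum>J\<in>nondecr_indices r m. (1 / of_nat (vmult r J)) *\<^sub>C (rper q r M I J * rper p r N J K))"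
    unfolding E3[of ?\<Phi>]
    by (rule arg_cong[where f="\<lambda>x. _ *\<^sub>C x"], rule sum.cong[OF refl], subst E2[OF q p man _ Kn K]) simp_all
  also have "\<dots> = (\<Sum>J\<in>nondecr_indices r m. rper_hat q r M I J * rper_hat p r N J K)"
    unfolding rper_hat_def scaleC_sum_right scaleC_mult_both
    by (rule sum.cong[OF refl]) (simp add: scaleC_scaleC mult.commute)
  finally show ?thesis .
qed

theorem mainTheorem12:
  fixes q p :: "nat \<Rightarrow> nat \<Rightarrow> complex"
    and M N :: "nat \<Rightarrow> nat \<Rightarrow> 'a::complex_algebra_1"
    and n m s r :: nat and I K :: "nat \<Rightarrow> nat"
  assumes "parametric_mat m q" and "parametric_mat s p"
    and "manin m s q p N"
    and "\<forall>i\<in>{1..m}. \<forall>j\<in>{1..s}. \<forall>k\<in>{1..n}. \<forall>l\<in>{1..m}. N i j * M k l = M k l * N i j"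
    and "\<forall>t\<in>{1..r}. I t \<in> {1..n}"
    and "\<forall>t\<in>{1..r}. K t \<in> {1..s}" and "nondecr r K"
  shows "(rper_hat p r (matmul m M N) I K =
           (\<Sum>J\<in>nondecr_indices r m. rper_hat q r M I J * rper_hat p r N J K)) \<and>
         (m = n \<and> s = n \<longrightarrow>
           rper_hat p n (matmul m M N) id id =
           (\<Sum>J\<in>nondecr_indices n m. rper_hat q n M id J * rper_hat p n N J id))"
proof
  show "rper_hat p r (matmul m M N) I K =
           (\<Sum>J\<in>nondecr_indices r m. rper_hat q r M I J * rper_hat p r N J K)"
    by (rule main_gen[OF assms])
next
  show "m = n \<and> s = n \<longrightarrow>
           rper_hat p n (matmul m M N) id id =
           (\<Sum>J\<in>nondecr_indices n m. rper_hat q n M id J * rper_hat p n N J id)"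
  proof
    assume mn: "m = n \<and> s = n"
    have nd: "nondecr n id" unfolding nondecr_def by simp
    show "rper_hat p n (matmul m M N) id id =
           (\<Sum>J\<in>nondecr_indices n m. rper_hat q n M id J * rper_hat p n N J id)"
      by (rule main_gen[OF assms(1-4), of n id id]) (use mn nd in auto)
  qed
qed

end
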